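(* Let $\mathcal{LS}_{\mathfrak{A}_1}$ be the operad (variety) of left-symmetric algebras over a field of characteristic $0$ satisfying the identity $(ab)c+(ba)c+(ac)b+(ca)b+(bc)a+(cb)a=0$. Its Koszul dual operad $\mathcal{LS}_{\mathfrak{A}_1}^{(!)}$ is the operad of alternative algebras satisfying the left-commutative identity $a(bc)=b(ac)$.
   Context: A left-symmetric algebra is an algebra whose associator $(a,b,c)=(ab)c-a(bc)$ satisfies $(a,b,c)=(b,a,c)$. An algebra is alternative if $(a,a,b)=0=(a,b,b)$. The Koszul dual of a binary quadratic operad is taken in the sense of Ginzburg–Kapranov; equivalently, $\mathcal{P}^{(!)}$ is the quadratic operad whose algebras $U$ are defined by exactly those degree-3 identities making $S\otimes U$, with product $(a\otimes u)(b\otimes v)=ab\otimes uv$, Lie-admissible (its commutator satisfies the Jacobi identity) for every $\mathcal{P}$-algebra $S$. *)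

theory Defs
  imports Main "HOL.Vector_Spaces"
begin

text \<open>Multilinear degree-3 monomials of the free nonassociative algebra on one
binary operation, in the variables x_0, x_1, x_2:
  Lm [i,j,k] = (x_i x_j) x_k  and  Rm [i,j,k] = x_i (x_j x_k),
with [i,j,k] a permutation of [0,1,2].  The component of arity 3 of the free
binary operad is the 12-dimensional space with this basis.\<close>

datatype mono3 = Lm "nat list" | Rm "nat list"

definition perms3 :: "nat list list" where
  "perms3 = [[0,1,2],[0,2,1],[1,0,2],[1,2,0],[2,0,1],[2,1,0]]"

definition monos3 :: "mono3 set" where
  "monos3 = Lm ` set perms3 \<union> Rm ` set perms3"

definition sgn3 :: "nat list \<Rightarrow> 'k::comm_ring_1" where
  "sgn3 p = (-1) ^ card {(i,j). i < j \<and> j < 3 \<and> p ! j < p ! i}"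

definition elems3 :: "(mono3 \<Rightarrow> 'k::field) set" where
  "elems3 = {f. \<forall>m. m \<notin> monos3 \<longrightarrow> f m = 0}"

definition delta3 :: "mono3 \<Rightarrow> mono3 \<Rightarrow> 'k::field" where
  "delta3 m m' = (if m' = m then 1 else 0)"

definition lin_span :: "(mono3 \<Rightarrow> 'k::field) list \<Rightarrow> (mono3 \<Rightarrow> 'k) set" where
  "lin_span gs = {f. \<exists>c. f = (\<lambda>m. \<Sum>i<length gs. c i * (gs ! i) m)}"

text \<open>Ginzburg--Kapranov pairing on the arity-3 component:
  <(x_i x_j) x_k, (x_i x_j) x_k> = sgn(ijk),  <x_i (x_j x_k), x_i (x_j x_k)> = - sgn(ijk),
all other pairings of basis monomials being 0.\<close>
definition eps3 :: "mono3 \<Rightarrow> 'k::field" where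
  "eps3 m = (case m of Lm p \<Rightarrow> sgn3 p | Rm p \<Rightarrow> - sgn3 p)"

definition pairing3 :: "(mono3 \<Rightarrow> 'k::field) \<Rightarrow> (mono3 \<Rightarrow> 'k) \<Rightarrow> 'k" where
  "pairing3 f g = (\<Sum>m\<in>monos3. eps3 m * f m * g m)"

text \<open>Relations of the Koszul dual: the orthogonal complement of the relations.\<close>
definition dual_rel :: "(mono3 \<Rightarrow> 'k::field) set \<Rightarrow> (mono3 \<Rightarrow> 'k) set" where
  "dual_rel R = {g \<in> elems3. \<forall>f\<in>R. pairing3 f g = 0}"

text \<open>Relations of LS_A1: left-symmetry (a,b,c) - (b,a,c) in all S3-relabellings,
and the identity (ab)c+(ba)c+(ac)b+(ca)b+(bc)a+(cb)a.\<close>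
definition ls_gen :: "nat list \<Rightarrow> mono3 \<Rightarrow> 'k::field" where
  "ls_gen p = (\<lambda>m. delta3 (Lm p) m - delta3 (Rm p) m
                  - delta3 (Lm [p!1, p!0, p!2]) m + delta3 (Rm [p!1, p!0, p!2]) m)"

definition a1_gen :: "mono3 \<Rightarrow> 'k::field" where
  "a1_gen = (\<lambda>m. \<Sum>p\<leftarrow>perms3. delta3 (Lm p) m)"

definition LS_A1_rel :: "(mono3 \<Rightarrow> 'k::field) set" where
  "LS_A1_rel = lin_span (a1_gen # map ls_gen perms3)"

definition bilinear_prod :: "('k::field \<Rightarrow> 'u::ab_group_add \<Rightarrow> 'u) \<Rightarrow> ('u \<Rightarrow> 'u \<Rightarrow> 'u) \<Rightarrow> bool" where
  "bilinear_prod smul mul \<longleftrightarrow>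
     (\<forall>x y z. mul (x + y) z = mul x z + mul y z) \<and>
     (\<forall>x y z. mul z (x + y) = mul z x + mul z y) \<and>
     (\<forall>c x y. mul (smul c x) y = smul c (mul x y)) \<and>
     (\<forall>c x y. mul x (smul c y) = smul c (mul x y))"

fun eval_mono :: "('u \<Rightarrow> 'u \<Rightarrow> 'u) \<Rightarrow> (nat \<Rightarrow> 'u) \<Rightarrow> mono3 \<Rightarrow> 'u" where
  "eval_mono mul a (Lm p) = mul (mul (a (p!0)) (a (p!1))) (a (p!2))"
| "eval_mono mul a (Rm p) = mul (a (p!0)) (mul (a (p!1)) (a (p!2)))"

definition satisfies3 :: "('k::field \<Rightarrow> 'u::ab_group_add \<Rightarrow> 'u) \<Rightarrow> ('u \<Rightarrow> 'u \<Rightarrow> 'u) \<Rightarrow> (mono3 \<Rightarrow> 'k) \<Rightarrow> bool" where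
  "satisfies3 smul mul g \<longleftrightarrow> (\<forall>a. (\<Sum>m\<in>monos3. smul (g m) (eval_mono mul a m)) = 0)"

definition associator :: "('u::ab_group_add \<Rightarrow> 'u \<Rightarrow> 'u) \<Rightarrow> 'u \<Rightarrow> 'u \<Rightarrow> 'u \<Rightarrow> 'u" where
  "associator mul a b c = mul (mul a b) c - mul a (mul b c)"

definition alternative :: "('u::ab_group_add \<Rightarrow> 'u \<Rightarrow> 'u) \<Rightarrow> bool" where
  "alternative mul \<longleftrightarrow> (\<forall>a b. associator mul a a b = 0 \<and> associator mul a b b = 0)"

definition left_commutative :: "('u \<Rightarrow> 'u \<Rightarrow> 'u) \<Rightarrow> bool" where
  "left_commutative mul \<longleftrightarrow> (\<forall>a b c. mul a (mul b c) = mul b (mul a c))"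

end

theory Submission
  imports Defs
begin

lemma sum_monos3: "sum h monos3 = h (Lm [0,1,2]) + h (Lm [0,2,1]) + h (Lm [1,0,2]) + h (Lm [1,2,0]) + h (Lm [2,0,1]) + h (Lm [2,1,0])
  + h (Rm [0,1,2]) + h (Rm [0,2,1]) + h (Rm [1,0,2]) + h (Rm [1,2,0]) + h (Rm [2,0,1]) + h (Rm [2,1,0])"
  by (simp add: monos3_def perms3_def add_ac)

lemma inv_set: "{(i,j). i < j \<and> j < (3::nat) \<and> P i j} = set (filter (\<lambda>x. P (fst x) (snd x)) [(0,1),(0,2),(1,2)])"
  by (auto simp: less_Suc_eq numeral_3_eq_3 numeral_2_eq_2)

lemma nth3: "[a,b,c] ! 0 = a" "[a,b,c] ! 1 = b" "[a,b,c] ! 2 = c"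
  by (simp_all add: numeral_2_eq_2)

lemma sgn3_vals:
  "sgn3 [0,1,2] = 1" "sgn3 [0,2,1] = -1" "sgn3 [1,0,2] = -1"
  "sgn3 [1,2,0] = 1" "sgn3 [2,0,1] = 1" "sgn3 [2,1,0] = -1"
  by (simp_all add: sgn3_def inv_set nth3)

lemma lin4: "(a::'k::field) + b + c + d = 0 \<Longrightarrow> d = -a-b-c"
  by (simp add: eq_neg_iff_add_eq_0 algebra_simps)
lemma lin6: "(a::'k::field) - b - c + d + e - f = 0 \<Longrightarrow> a = b + c - d - e + f"
  by (simp add: algebra_simps)

lemma gen_in_span: "i < length gs \<Longrightarrow> gs ! i \<in> lin_span gs"
proof -
  assume i: "i < length gs"
  have eq: "gs ! i = (\<lambda>m. \<Sum>j<length gs. (if j = i then 1 else 0) * (gs ! j) m)"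
    using i by (intro ext) (simp add: if_distrib[of "\<lambda>c. c * _"] sum.delta cong: if_cong)
  show ?thesis unfolding lin_span_def mem_Collect_eq by (rule exI, rule eq)
qed

lemma pairing_span:
  "pairing3 (\<lambda>m. \<Sum>i<n. c i * (gs ! i) m) g = (\<Sum>i<n. c i * pairing3 (gs ! i) g)"
  unfolding pairing3_def
  by (simp add: sum_distrib_left sum_distrib_right mult_ac sum.swap[of _ monos3])

lemma orth_span:
  assumes "\<And>i. i < length gs \<Longrightarrow> pairing3 (gs ! i) g = 0"
  shows "\<forall>f\<in>lin_span gs. pairing3 f g = 0"
  using assms by (auto simp: lin_span_def pairing_span)

lemma gens_in:
  "a1_gen \<in> LS_A1_rel"
  "p \<in> set perms3 \<Longrightarrow> ls_gen p \<in> LS_A1_rel"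
proof -
  show "a1_gen \<in> LS_A1_rel" unfolding LS_A1_rel_def
    using gen_in_span[of 0 "a1_gen # map ls_gen perms3"] by simp
  assume "p \<in> set perms3"
  then obtain i where i: "i < length perms3" "p = perms3 ! i" by (auto simp: in_set_conv_nth)
  then show "ls_gen p \<in> LS_A1_rel" unfolding LS_A1_rel_def
    using gen_in_span[of "Suc i" "a1_gen # map ls_gen perms3"] by simp
qed

lemma dual_eqs:
  fixes g :: "mono3 \<Rightarrow> 'k::field"
  assumes "g \<in> dual_rel LS_A1_rel"
  shows "g (Rm [1,0,2]) = - g (Lm [0,1,2]) - g (Rm [0,1,2]) - g (Lm [1,0,2])"
    and "g (Rm [2,0,1]) = - g (Lm [0,2,1]) - g (Rm [0,2,1]) - g (Lm [2,0,1])"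
    and "g (Rm [2,1,0]) = - g (Lm [1,2,0]) - g (Rm [1,2,0]) - g (Lm [2,1,0])"
    and "g (Lm [0,1,2]) = g (Lm [0,2,1]) + g (Lm [1,0,2]) - g (Lm [1,2,0]) - g (Lm [2,0,1]) + g (Lm [2,1,0])"
proof -
  have o: "\<And>f. f \<in> LS_A1_rel \<Longrightarrow> pairing3 f g = 0" using assms by (auto simp: dual_rel_def)
  have p1: "pairing3 (ls_gen [0,1,2]) g = 0" by (rule o, rule gens_in, simp add: perms3_def)
  have p2: "pairing3 (ls_gen [0,2,1]) g = 0" by (rule o, rule gens_in, simp add: perms3_def)
  have p3: "pairing3 (ls_gen [1,2,0]) g = 0" by (rule o, rule gens_in, simp add: perms3_def)
  have p4: "pairing3 a1_gen g = 0" by (rule o, rule gens_in)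
  note defs = pairing3_def sum_monos3 ls_gen_def a1_gen_def delta3_def eps3_def sgn3_def inv_set nth3 perms3_def
  have q1: "pairing3 (ls_gen [0,1,2]) g = g (Lm [0,1,2]) + g (Rm [0,1,2]) + g (Lm [1,0,2]) + g (Rm [1,0,2])"
    by (simp add: defs algebra_simps)
  have q2: "pairing3 (ls_gen [0,2,1]) g = - (g (Lm [0,2,1]) + g (Rm [0,2,1]) + g (Lm [2,0,1]) + g (Rm [2,0,1]))"
    by (simp add: defs algebra_simps)
  have q3: "pairing3 (ls_gen [1,2,0]) g = g (Lm [1,2,0]) + g (Rm [1,2,0]) + g (Lm [2,1,0]) + g (Rm [2,1,0])"
    by (simp add: defs algebra_simps)
  have q4: "pairing3 a1_gen g = g (Lm [0,1,2]) - g (Lm [0,2,1]) - g (Lm [1,0,2]) + g (Lm [1,2,0]) + g (Lm [2,0,1]) - g (Lm [2,1,0])"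
    by (simp add: defs algebra_simps)
  show "g (Rm [1,0,2]) = - g (Lm [0,1,2]) - g (Rm [0,1,2]) - g (Lm [1,0,2])"
    by (rule lin4) (use p1 q1 in simp)
  show "g (Rm [2,0,1]) = - g (Lm [0,2,1]) - g (Rm [0,2,1]) - g (Lm [2,0,1])"
    by (rule lin4) (use p2 in \<open>unfold q2, simp only: neg_equal_0_iff_equal\<close>)
  show "g (Rm [2,1,0]) = - g (Lm [1,2,0]) - g (Rm [1,2,0]) - g (Lm [2,1,0])"
    by (rule lin4) (use p3 q3 in simp)
  show "g (Lm [0,1,2]) = g (Lm [0,2,1]) + g (Lm [1,0,2]) - g (Lm [1,2,0]) - g (Lm [2,0,1]) + g (Lm [2,1,0])"
    by (rule lin6) (use p4 q4 in simp)
qed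

lemma orth_set:
  assumes "\<And>f. f \<in> set gs \<Longrightarrow> pairing3 f g = 0"
  shows "\<forall>f\<in>lin_span gs. pairing3 f g = 0"
  by (rule orth_span) (use assms in auto)

lemma in_dual:
  fixes g :: "mono3 \<Rightarrow> 'k::field"
  assumes "g \<in> elems3"
    and "pairing3 a1_gen g = 0"
    and "pairing3 (ls_gen [0,1,2]) g = 0" "pairing3 (ls_gen [0,2,1]) g = 0"
    and "pairing3 (ls_gen [1,0,2]) g = 0" "pairing3 (ls_gen [1,2,0]) g = 0"
    and "pairing3 (ls_gen [2,0,1]) g = 0" "pairing3 (ls_gen [2,1,0]) g = 0"
  shows "g \<in> dual_rel LS_A1_rel"
  unfolding dual_rel_def LS_A1_rel_def
  using assms orth_set[of "a1_gen # map ls_gen perms3" g]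
  by (auto simp: perms3_def)

lemma assoc_lin:
  assumes bl: "bilinear_prod smul mul" and alt: "alternative mul"
  shows "associator mul x y z = - associator mul y x z"
    and "associator mul x y z = - associator mul x z y"
proof -
  from bl have d1: "\<And>x y z. mul (x + y) z = mul x z + mul y z"
    and d2: "\<And>x y z. mul z (x + y) = mul z x + mul z y" by (auto simp: bilinear_prod_def)
  have "associator mul (x+y) (x+y) z = 0" using alt by (simp add: alternative_def)
  then have "associator mul x y z + associator mul y x z = 0"
    using alt unfolding alternative_def associator_def
    by (simp add: d1 d2 algebra_simps)
  then show "associator mul x y z = - associator mul y x z" by (simp add: eq_neg_iff_add_eq_0)
  have "associator mul x (y+z) (y+z) = 0" using alt by (simp add: alternative_def)
  then have "associator mul x y z + associator mul x z y = 0"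
    using alt unfolding alternative_def associator_def
    by (simp add: d1 d2 algebra_simps)
  then show "associator mul x y z = - associator mul x z y" by (simp add: eq_neg_iff_add_eq_0)
qed

theorem mainTheorem3:
  fixes smul :: "'k::field_char_0 \<Rightarrow> 'u::ab_group_add \<Rightarrow> 'u"
    and mul :: "'u \<Rightarrow> 'u \<Rightarrow> 'u"
  assumes "vector_space smul"
    and "bilinear_prod smul mul"
  shows "(\<forall>g\<in>dual_rel (LS_A1_rel :: (mono3 \<Rightarrow> 'k) set). satisfies3 smul mul g)
         \<longleftrightarrow> alternative mul \<and> left_commutative mul"
proof -
  interpret V: vector_space smul by fact
  note bl = assms(2)
  show ?thesis
  proof
    assume H: "\<forall>g\<in>dual_rel (LS_A1_rel :: (mono3 \<Rightarrow> 'k) set). satisfies3 smul mul g"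
    note defs = pairing3_def sum_monos3 ls_gen_def a1_gen_def delta3_def eps3_def sgn3_def inv_set nth3
    define g1 :: "mono3 \<Rightarrow> 'k" where "g1 = (\<lambda>m. delta3 (Lm [0,1,2]) m - delta3 (Rm [0,1,2]) m + delta3 (Lm [1,0,2]) m - delta3 (Rm [1,0,2]) m)"
    define g2 :: "mono3 \<Rightarrow> 'k" where "g2 = (\<lambda>m. delta3 (Lm [0,1,2]) m - delta3 (Rm [0,1,2]) m + delta3 (Lm [0,2,1]) m - delta3 (Rm [0,2,1]) m)"
    define g3 :: "mono3 \<Rightarrow> 'k" where "g3 = (\<lambda>m. delta3 (Rm [0,1,2]) m - delta3 (Rm [1,0,2]) m)"
    have "g1 \<in> dual_rel LS_A1_rel"
      by (rule in_dual) (auto simp: g1_def defs elems3_def monos3_def perms3_def)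
    then have s1: "satisfies3 smul mul g1" using H by blast
    have "g2 \<in> dual_rel LS_A1_rel"
      by (rule in_dual) (auto simp: g2_def defs elems3_def monos3_def perms3_def)
    then have s2: "satisfies3 smul mul g2" using H by blast
    have "g3 \<in> dual_rel LS_A1_rel"
      by (rule in_dual) (auto simp: g3_def defs elems3_def monos3_def perms3_def)
    then have s3: "satisfies3 smul mul g3" using H by blast
    have two: "w = 0" if "w + w = 0" for w :: 'u
    proof -
      have "smul 2 w = smul (1 + 1) w" by simp
      also have "\<dots> = w + w" by (simp only: V.scale_left_distrib V.scale_one)
      finally have "smul 2 w = 0" using that by simp
      then show ?thesis by simp
    qed
    have l1: "associator mul x y z + associator mul y x z = 0" for x y z
      using s1 unfolding satisfies3_def
      apply (erule_tac x="\<lambda>n. [x,y,z] ! n" in allE)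
      by (simp add: g1_def sum_monos3 delta3_def nth3 associator_def algebra_simps)
    have l2: "associator mul x y z + associator mul x z y = 0" for x y z
      using s2 unfolding satisfies3_def
      apply (erule_tac x="\<lambda>n. [x,y,z] ! n" in allE)
      by (simp add: g2_def sum_monos3 delta3_def nth3 associator_def algebra_simps)
    have l3: "mul x (mul y z) = mul y (mul x z)" for x y z
      using s3 unfolding satisfies3_def
      apply (erule_tac x="\<lambda>n. [x,y,z] ! n" in allE)
      by (simp add: g3_def sum_monos3 delta3_def nth3 algebra_simps)
    show "alternative mul \<and> left_commutative mul"
      unfolding alternative_def left_commutative_def
      using l3 two l1 l2 by blast
  next
    assume A: "alternative mul \<and> left_commutative mul"
    then have alt: "alternative mul" and lc: "\<And>x y z. mul x (mul y z) = mul y (mul x z)"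
      by (auto simp: left_commutative_def)
    show "\<forall>g\<in>dual_rel (LS_A1_rel :: (mono3 \<Rightarrow> 'k) set). satisfies3 smul mul g"
    proof (intro ballI)
      fix g :: "mono3 \<Rightarrow> 'k" assume g: "g \<in> dual_rel LS_A1_rel"
      show "satisfies3 smul mul g" unfolding satisfies3_def
      proof
        fix a :: "nat \<Rightarrow> 'u"
        let ?x = "a 0" and ?y = "a 1" and ?z = "a 2"
        note al = assoc_lin[OF bl alt]
        have r1: "mul (mul ?x ?z) ?y = mul ?x (mul ?z ?y) - (mul (mul ?x ?y) ?z - mul ?x (mul ?y ?z))"
          using al(2)[of ?x ?y ?z] by (simp add: associator_def algebra_simps)
        have r2: "mul (mul ?y ?x) ?z = mul ?y (mul ?x ?z) - (mul (mul ?x ?y) ?z - mul ?x (mul ?y ?z))"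
          using al(1)[of ?x ?y ?z] by (simp add: associator_def algebra_simps)
        have r3: "mul (mul ?y ?z) ?x = mul ?y (mul ?z ?x) + (mul (mul ?x ?y) ?z - mul ?x (mul ?y ?z))"
        proof -
          have "associator mul ?y ?z ?x = associator mul ?x ?y ?z"
            using al(1)[of ?x ?y ?z] al(2)[of ?y ?x ?z] by simp
          then show ?thesis by (simp add: associator_def algebra_simps)
        qed
        have r4: "mul (mul ?z ?x) ?y = mul ?z (mul ?x ?y) + (mul (mul ?x ?y) ?z - mul ?x (mul ?y ?z))"
        proof -
          have "associator mul ?z ?x ?y = associator mul ?x ?y ?z"
            using al(2)[of ?x ?y ?z] al(1)[of ?x ?z ?y] by simp
          then show ?thesis by (simp add: associator_def algebra_simps)
        qed
        have r5: "mul (mul ?z ?y) ?x = mul ?z (mul ?y ?x) - (mul (mul ?x ?y) ?z - mul ?x (mul ?y ?z))"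
        proof -
          have "associator mul ?z ?y ?x = - associator mul ?x ?y ?z"
            using al(1)[of ?x ?y ?z] al(2)[of ?y ?x ?z] al(1)[of ?y ?z ?x] by simp
          then show ?thesis by (simp add: associator_def algebra_simps)
        qed
        have r6: "mul ?y (mul ?x ?z) = mul ?x (mul ?y ?z)" by (rule lc)
        have r7: "mul ?z (mul ?x ?y) = mul ?x (mul ?z ?y)" by (rule lc)
        have r8: "mul ?z (mul ?y ?x) = mul ?y (mul ?z ?x)" by (rule lc)
        note ge = dual_eqs[OF g]
        show "(\<Sum>m\<in>monos3. smul (g m) (eval_mono mul a m)) = 0"
          apply (simp only: sum_monos3 eval_mono.simps nth3 ge)
          apply (simp only: r1 r2 r3 r4 r5 r6 r7 r8)
          apply (simp add: algebra_simps)
          apply (simp only: mult_2 V.scale_left_distrib)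
          done
      qed
    qed
  qed
qed

end
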